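(* If the differentiable function $F:\Omega\subset\mathbb{C}^{2p}\to\mathbb S$ is q-monogenic, then so are the functions $PF$ and $QF$.
   Context: Identify $\mathbb{C}^{2p}\simeq\mathbb{R}^{4p}$ with coordinates $(x_1,y_1,\dots,x_{2p},y_{2p})$, $z_k=x_k+iy_k$, $\partial_{z_k}=\tfrac12(\partial_{x_k}-i\partial_{y_k})$, $\partial_{\bar z_k}=\tfrac12(\partial_{x_k}+i\partial_{y_k})$; $\Omega$ open. $\mathbb{C}_{4p}$ is the complex Clifford algebra generated by $e_1,\dots,e_{4p}$ with $e_\alpha e_\beta+e_\beta e_\alpha=-2\delta_{\alpha\beta}$. Witt basis: $\mathfrak f_k=\tfrac12(-e_{2k-1}+ie_{2k})$, $\mathfrak f_k^\dagger=\tfrac12(e_{2k-1}+ie_{2k})$. $I=\prod_k\mathfrak f_k\mathfrak f_k^\dagger$, $\mathbb S=\mathbb C_{4p}I$. $P=\sum_{j=1}^p\mathfrak f_{2j}\mathfrak f_{2j-1}$, $Q=\sum_{j=1}^p\mathfrak f^\dagger_{2j-1}\mathfrak f^\dagger_{2j}$, acting by left multiplication. A function $G$ with values in $\mathbb S$ is q-monogenic if it is annihilated by $\partial_{\underline z}=\sum_{k}\mathfrak f_k^\dagger\partial_{z_k}$, $\partial_{\underline z}^\dagger=\sum_{k}\mathfrak f_k\partial_{\bar z_k}$, $\partial_{\underline z}^J=\sum_{j=1}^p(\mathfrak f_{2j-1}\partial_{z_{2j}}-\mathfrak f_{2j}\partial_{z_{2j-1}})$ and $\partial_{\underline z}^{\dagger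 J}=\sum_{j=1}^p(\mathfrak f^\dagger_{2j-1}\partial_{\bar z_{2j}}-\mathfrak f^\dagger_{2j}\partial_{\bar z_{2j-1}})$ (equivalently, by $\underline\partial=\sum_\alpha e_\alpha\partial_{X_\alpha}$ and its rotations by the complex structures $\mathbb I,\mathbb J,\mathbb K=\mathbb I\mathbb J$, where $\mathbb{I}(e_{2k-1})=e_{2k}$, $\mathbb{I}(e_{2k})=-e_{2k-1}$, $\mathbb{J}(e_{4j-3})=e_{4j-1}$, $\mathbb{J}(e_{4j-2})=-e_{4j}$, $\mathbb{J}(e_{4j-1})=-e_{4j-3}$, $\mathbb{J}(e_{4j})=e_{4j-2}$). *)

theory Defs
  imports "HOL-Analysis.Analysis"
begin

text \<open>Complex Clifford algebra: an element is a coefficient function on blades,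
  a blade being a finite set of generator indices; the algebra C_n consists of
  elements supported on subsets of {1..n}. Generators satisfy e_a e_b + e_b e_a = -2 delta_ab.\<close>

type_synonym cliff = "nat set \<Rightarrow> complex"

definition cl_zero :: cliff where "cl_zero = (\<lambda>A. 0)"
definition cl_one :: cliff where "cl_one = (\<lambda>A. if A = {} then 1 else 0)"
definition cl_gen :: "nat \<Rightarrow> cliff" where "cl_gen i = (\<lambda>A. if A = {i} then 1 else 0)"
definition cl_add :: "cliff \<Rightarrow> cliff \<Rightarrow> cliff" where "cl_add x y = (\<lambda>A. x A + y A)"
definition cl_scale :: "complex \<Rightarrow> cliff \<Rightarrow> cliff" where "cl_scale c x = (\<lambda>A. c * x A)"
definition cl_sum :: "('i \<Rightarrow> cliff) \<Rightarrow> 'i set \<Rightarrow> cliff" where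
  "cl_sum f K = (\<lambda>A. \<Sum>k\<in>K. f k A)"

definition clifford_alg :: "nat \<Rightarrow> cliff set" where
  "clifford_alg n = {x. \<forall>A. x A \<noteq> 0 \<longrightarrow> A \<subseteq> {1..n}}"

text \<open>e_A e_B = sign(A,B) e_(A symmetric-difference B), with e_i e_i = -1.\<close>
definition blade_sign :: "nat set \<Rightarrow> nat set \<Rightarrow> complex" where
  "blade_sign A B = (-1) ^ (card {(a,b). a \<in> A \<and> b \<in> B \<and> b < a} + card (A \<inter> B))"

definition cl_mult :: "nat \<Rightarrow> cliff \<Rightarrow> cliff \<Rightarrow> cliff" where
  "cl_mult n x y = (\<lambda>C. \<Sum>A\<in>Pow {1..n}. \<Sum>B\<in>Pow {1..n}.
      if (A - B) \<union> (B - A) = C then blade_sign A B * x A * y B else 0)"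

definition witt :: "nat \<Rightarrow> cliff" where
  "witt k = cl_scale (1/2) (cl_add (cl_scale (-1) (cl_gen (2*k-1))) (cl_scale \<i> (cl_gen (2*k))))"
definition witt_dag :: "nat \<Rightarrow> cliff" where
  "witt_dag k = cl_scale (1/2) (cl_add (cl_gen (2*k-1)) (cl_scale \<i> (cl_gen (2*k))))"

primrec idem_prod :: "nat \<Rightarrow> nat \<Rightarrow> cliff" where
  "idem_prod n 0 = cl_one"
| "idem_prod n (Suc m) = cl_mult n (idem_prod n m) (cl_mult n (witt (Suc m)) (witt_dag (Suc m)))"

definition prim_idem :: "nat \<Rightarrow> cliff" where
  "prim_idem p = idem_prod (4*p) (2*p)"

definition spinor_space :: "nat \<Rightarrow> cliff set" where
  "spinor_space p = {cl_mult (4*p) a (prim_idem p) | a. a \<in> clifford_alg (4*p)}"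

definition P_op :: "nat \<Rightarrow> cliff" where
  "P_op p = cl_sum (\<lambda>j. cl_mult (4*p) (witt (2*j)) (witt (2*j-1))) {1..p}"
definition Q_op :: "nat \<Rightarrow> cliff" where
  "Q_op p = cl_sum (\<lambda>j. cl_mult (4*p) (witt_dag (2*j-1)) (witt_dag (2*j))) {1..p}"

text \<open>Points of C^{2p}: complex^'n, where idx enumerates the coordinates as z_1..z_{2p}.
  Partial derivatives along x_k and y_k (real and imaginary parts of z_k), componentwise.\<close>
definition pdx :: "(nat \<Rightarrow> 'n::finite) \<Rightarrow> nat \<Rightarrow> (complex^'n \<Rightarrow> cliff) \<Rightarrow> complex^'n \<Rightarrow> cliff" where
  "pdx idx k G z = (\<lambda>A. vector_derivative (\<lambda>t::real. G (z + t *\<^sub>R axis (idx k) 1) A) (at 0))"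
definition pdy :: "(nat \<Rightarrow> 'n::finite) \<Rightarrow> nat \<Rightarrow> (complex^'n \<Rightarrow> cliff) \<Rightarrow> complex^'n \<Rightarrow> cliff" where
  "pdy idx k G z = (\<lambda>A. vector_derivative (\<lambda>t::real. G (z + t *\<^sub>R axis (idx k) \<i>) A) (at 0))"
definition pdz :: "(nat \<Rightarrow> 'n::finite) \<Rightarrow> nat \<Rightarrow> (complex^'n \<Rightarrow> cliff) \<Rightarrow> complex^'n \<Rightarrow> cliff" where
  "pdz idx k G z = cl_scale (1/2) (cl_add (pdx idx k G z) (cl_scale (-\<i>) (pdy idx k G z)))"
definition pdzb :: "(nat \<Rightarrow> 'n::finite) \<Rightarrow> nat \<Rightarrow> (complex^'n \<Rightarrow> cliff) \<Rightarrow> complex^'n \<Rightarrow> cliff" where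
  "pdzb idx k G z = cl_scale (1/2) (cl_add (pdx idx k G z) (cl_scale \<i> (pdy idx k G z)))"

definition dirac_z :: "nat \<Rightarrow> (nat \<Rightarrow> 'n::finite) \<Rightarrow> (complex^'n \<Rightarrow> cliff) \<Rightarrow> complex^'n \<Rightarrow> cliff" where
  "dirac_z p idx G z = cl_sum (\<lambda>k. cl_mult (4*p) (witt_dag k) (pdz idx k G z)) {1..2*p}"
definition dirac_z_dag :: "nat \<Rightarrow> (nat \<Rightarrow> 'n::finite) \<Rightarrow> (complex^'n \<Rightarrow> cliff) \<Rightarrow> complex^'n \<Rightarrow> cliff" where
  "dirac_z_dag p idx G z = cl_sum (\<lambda>k. cl_mult (4*p) (witt k) (pdzb idx k G z)) {1..2*p}"
definition dirac_zJ :: "nat \<Rightarrow> (nat \<Rightarrow> 'n::finite) \<Rightarrow> (complex^'n \<Rightarrow> cliff) \<Rightarrow> complex^'n \<Rightarrow> cliff" where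
  "dirac_zJ p idx G z = cl_sum (\<lambda>j. cl_add (cl_mult (4*p) (witt (2*j-1)) (pdz idx (2*j) G z))
       (cl_scale (-1) (cl_mult (4*p) (witt (2*j)) (pdz idx (2*j-1) G z)))) {1..p}"
definition dirac_zJ_dag :: "nat \<Rightarrow> (nat \<Rightarrow> 'n::finite) \<Rightarrow> (complex^'n \<Rightarrow> cliff) \<Rightarrow> complex^'n \<Rightarrow> cliff" where
  "dirac_zJ_dag p idx G z = cl_sum (\<lambda>j. cl_add (cl_mult (4*p) (witt_dag (2*j-1)) (pdzb idx (2*j) G z))
       (cl_scale (-1) (cl_mult (4*p) (witt_dag (2*j)) (pdzb idx (2*j-1) G z)))) {1..p}"

definition cl_differentiable_on :: "(complex^'n::finite) set \<Rightarrow> (complex^'n \<Rightarrow> cliff) \<Rightarrow> bool" where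
  "cl_differentiable_on \<Omega> G = (\<forall>z\<in>\<Omega>. \<forall>A. (\<lambda>w. G w A) differentiable (at z))"

definition q_monogenic :: "nat \<Rightarrow> (nat \<Rightarrow> 'n::finite) \<Rightarrow> (complex^'n) set \<Rightarrow> (complex^'n \<Rightarrow> cliff) \<Rightarrow> bool" where
  "q_monogenic p idx \<Omega> G \<longleftrightarrow>
     (\<forall>z\<in>\<Omega>. G z \<in> spinor_space p) \<and> cl_differentiable_on \<Omega> G \<and>
     (\<forall>z\<in>\<Omega>. dirac_z p idx G z = cl_zero \<and> dirac_z_dag p idx G z = cl_zero \<and>
              dirac_zJ p idx G z = cl_zero \<and> dirac_zJ_dag p idx G z = cl_zero)"

end

theory Submission
  imports Defs
begin


definition sd :: "nat set \<Rightarrow> nat set \<Rightarrow> nat set" where "sd A B = (A - B) \<union> (B - A)"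

definition sg :: "nat set \<Rightarrow> nat set \<Rightarrow> complex" where
  "sg A B = (\<Prod>a\<in>A. \<Prod>b\<in>B. if b \<le> a then -1 else 1)"

lemma card_split:
  fixes A B :: "nat set"
  assumes "finite A" "finite B"
  shows "card {(a,b). a \<in> A \<and> b \<in> B \<and> b < a} + card (A \<inter> B) = card {(a,b). a \<in> A \<and> b \<in> B \<and> b \<le> a}"
proof -
  have fin: "finite (A \<times> B)" using assms by simp
  have e: "{(a,b). a \<in> A \<and> b \<in> B \<and> b \<le> a} = {(a,b). a \<in> A \<and> b \<in> B \<and> b < a} \<union> (\<lambda>x. (x,x)) ` (A \<inter> B)"
    by force
  have "card ((\<lambda>x. (x,x)) ` (A \<inter> B)) = card (A \<inter> B)"
    by (rule card_image) (auto simp: inj_on_def)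
  moreover have "card ({(a,b). a \<in> A \<and> b \<in> B \<and> b < a} \<union> (\<lambda>x. (x,x)) ` (A \<inter> B))
     = card {(a,b). a \<in> A \<and> b \<in> B \<and> b < a} + card ((\<lambda>x. (x,x)) ` (A \<inter> B))"
    apply (rule card_Un_disjoint)
    apply (rule finite_subset[OF _ fin], auto)
    using assms by auto
  ultimately show ?thesis using e by simp
qed

lemma blade_sign_sg:
  fixes A B :: "nat set"
  assumes "finite A" "finite B"
  shows "blade_sign A B = sg A B"
proof -
  have "sg A B = (\<Prod>x\<in>A \<times> B. if snd x \<le> fst x then -1 else 1)"
    unfolding sg_def by (simp add: prod.cartesian_product case_prod_beta)
  also have "\<dots> = (\<Prod>x\<in>{x\<in>A\<times>B. snd x \<le> fst x}. -1)"
  proof -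
    have "A \<times> B \<inter> {x. snd x \<le> fst x} = {x\<in>A\<times>B. snd x \<le> fst x}" by auto
    then show ?thesis using assms by (simp add: prod.If_cases)
  qed
  also have "\<dots> = (-1) ^ card {x\<in>A\<times>B. snd x \<le> fst x}" by simp
  also have "{x\<in>A\<times>B. snd x \<le> fst x} = {(a,b). a \<in> A \<and> b \<in> B \<and> b \<le> a}" by auto
  finally have "sg A B = (-1) ^ card {(a,b). a \<in> A \<and> b \<in> B \<and> b \<le> a}" by simp
  then show ?thesis unfolding blade_sign_def card_split[OF assms] by simp
qed

lemma prod_sd:
  fixes g :: "nat \<Rightarrow> complex"
  assumes "finite A" "finite B" "\<And>x. g x * g x = 1"
  shows "prod g (sd A B) = prod g A * prod g B"
proof -
  have sq: "prod g S * prod g S = 1" for S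
    unfolding prod.distrib[symmetric] using assms(3) by simp
  have 1: "prod g (sd A B) = prod g (A - B) * prod g (B - A)"
    unfolding sd_def by (rule prod.union_disjoint) (use assms in auto)
  have 2: "prod g A = prod g (A - B) * prod g (A \<inter> B)"
    using prod.Int_Diff[OF assms(1), of g B] by (simp add: mult.commute)
  have 3: "prod g B = prod g (B - A) * prod g (A \<inter> B)"
    using prod.Int_Diff[OF assms(2), of g A] by (simp add: mult.commute Int_commute)
  show ?thesis using 1 2 3 sq by (simp add: algebra_simps)
qed

lemma ifsq[simp]: "(if c then -1 else 1) * (if c then -1 else 1) = (1::complex)" by simp

lemma sgsq: "sg A B * sg A B = 1"
  unfolding sg_def prod.distrib[symmetric] by simp

lemma sg_sd1: "finite A \<Longrightarrow> finite B \<Longrightarrow> sg (sd A B) C = sg A C * sg B C"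
  unfolding sg_def by (rule prod_sd) (unfold prod.distrib[symmetric], auto)

lemma sg_sd2: "finite B \<Longrightarrow> finite C \<Longrightarrow> sg A (sd B C) = sg A B * sg A C"
  unfolding sg_def
  by (subst prod.distrib[symmetric]) (rule prod.cong, simp, rule prod_sd, auto)



lemma finite_sd[simp]: "finite A \<Longrightarrow> finite B \<Longrightarrow> finite (sd A B)"
  unfolding sd_def by auto

lemma sd_eq_iff: "(sd A B = C) = (B = sd A C)"
  unfolding sd_def by auto

lemma sd_sd[simp]: "sd A (sd A B) = B"
  unfolding sd_def by auto

lemma sd_assoc: "sd (sd A B) C = sd B (sd A C)"
  unfolding sd_def by auto

lemma sd_sub: "A \<subseteq> S \<Longrightarrow> (sd A C \<subseteq> S) = (C \<subseteq> S)"
  unfolding sd_def by auto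

lemma sgsq2: "sg A B * (sg A B * r) = r"
  by (metis mult.assoc mult_1 sgsq)

lemma mult_alt:
  "cl_mult n x y C = (if C \<subseteq> {1..n} then
      (\<Sum>A\<in>Pow {1..n}. sg A (sd A C) * x A * y (sd A C)) else 0)"
proof -
  have "cl_mult n x y C = (\<Sum>A\<in>Pow {1..n}. if sd A C \<in> Pow {1..n}
        then blade_sign A (sd A C) * x A * y (sd A C) else 0)"
    unfolding cl_mult_def sd_def[symmetric] sd_eq_iff
    by (rule sum.cong, simp, subst sum.delta, auto)
  also have "\<dots> = (\<Sum>A\<in>Pow {1..n}. if C \<subseteq> {1..n} then
        sg A (sd A C) * x A * y (sd A C) else 0)"
  proof (rule sum.cong[OF refl])
    fix A assume A: "A \<in> Pow {1..n}"
    show "(if sd A C \<in> Pow {1..n} then blade_sign A (sd A C) * x A * y (sd A C) else 0) =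
      (if C \<subseteq> {1..n} then sg A (sd A C) * x A * y (sd A C) else 0)"
    proof (cases "C \<subseteq> {1..n}")
      case True
      then have s: "sd A C \<subseteq> {1..n}" using A sd_sub by auto
      then have "finite A" "finite (sd A C)" using A finite_subset by auto
      then show ?thesis using True s by (simp add: blade_sign_sg)
    next
      case False then show ?thesis using A sd_sub by auto
    qed
  qed
  finally show ?thesis by auto
qed

lemma mult_sub: "\<not> C \<subseteq> {1..n} \<Longrightarrow> cl_mult n x y C = 0"
  by (simp add: mult_alt)

lemma mult_in_alg[simp]: "cl_mult n x y \<in> clifford_alg n"
  unfolding clifford_alg_def using mult_sub by blast

lemma sign_assoc:
  assumes "finite A" "finite B" "finite C"
  shows "sg (sd A B) (sd B (sd A C)) * sg A B = sg A (sd A C) * sg B (sd B (sd A C))"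
  using assms by (simp add: sg_sd1 sg_sd2 mult_ac sgsq sgsq2)

lemma cl_mult_assoc:
  "cl_mult n (cl_mult n x y) z = cl_mult n x (cl_mult n y z)"
proof
  fix C
  let ?P = "Pow {1..n}"
  show "cl_mult n (cl_mult n x y) z C = cl_mult n x (cl_mult n y z) C"
  proof (cases "C \<subseteq> {1..n}")
    case False then show ?thesis by (simp add: mult_sub)
  next
    case True
    have fin: "finite ?P" by simp
    have "cl_mult n (cl_mult n x y) z C =
       (\<Sum>D\<in>?P. sg D (sd D C) * (\<Sum>A\<in>?P. sg A (sd A D) * x A * y (sd A D)) * z (sd D C))"
      using True unfolding mult_alt[of n _ z]
      by (simp, intro sum.cong refl, simp add: mult_alt[of n x y])
    also have "\<dots> = (\<Sum>D\<in>?P. \<Sum>A\<in>?P. sg D (sd D C) * sg A (sd A D) * x A * y (sd A D) * z (sd D C))"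
      by (simp add: sum_distrib_left sum_distrib_right mult_ac)
    also have "\<dots> = (\<Sum>A\<in>?P. \<Sum>D\<in>?P. sg D (sd D C) * sg A (sd A D) * x A * y (sd A D) * z (sd D C))"
      by (rule sum.swap)
    also have "\<dots> = (\<Sum>A\<in>?P. \<Sum>B\<in>?P. sg (sd A B) (sd B (sd A C)) * sg A B * x A * y B * z (sd B (sd A C)))"
    proof (rule sum.cong, simp)
      fix A assume A: "A \<in> ?P"
      have bij: "bij_betw (sd A) ?P ?P"
        apply (rule bij_betwI[where g = "sd A"])
        using A by (auto simp: sd_sub)
      show "(\<Sum>D\<in>?P. sg D (sd D C) * sg A (sd A D) * x A * y (sd A D) * z (sd D C)) =
            (\<Sum>B\<in>?P. sg (sd A B) (sd B (sd A C)) * sg A B * x A * y B * z (sd B (sd A C)))"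
        using sum.reindex_bij_betw[OF bij, of "\<lambda>D. sg D (sd D C) * sg A (sd A D) * x A * y (sd A D) * z (sd D C)"]
        by (simp add: sd_assoc)
    qed
    also have "\<dots> = (\<Sum>A\<in>?P. \<Sum>B\<in>?P. sg A (sd A C) * x A * (sg B (sd B (sd A C)) * y B * z (sd B (sd A C))))"
    proof (intro sum.cong refl)
      fix A B assume "A \<in> ?P" "B \<in> ?P"
      then have "finite A" "finite B" using finite_subset by auto
      moreover have "finite C" using True finite_subset by auto
      ultimately show "sg (sd A B) (sd B (sd A C)) * sg A B * x A * y B * z (sd B (sd A C)) =
          sg A (sd A C) * x A * (sg B (sd B (sd A C)) * y B * z (sd B (sd A C)))"
        using sign_assoc by (simp add: mult_ac)
    qed
    also have "\<dots> = (\<Sum>A\<in>?P. sg A (sd A C) * x A * cl_mult n y z (sd A C))"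
    proof (rule sum.cong[OF refl])
      fix A assume A: "A \<in> ?P"
      then have "sd A C \<subseteq> {1..n}" using True sd_sub by auto
      then show "(\<Sum>B\<in>?P. sg A (sd A C) * x A * (sg B (sd B (sd A C)) * y B * z (sd B (sd A C)))) =
         sg A (sd A C) * x A * cl_mult n y z (sd A C)"
        by (subst mult_alt[of n y z]) (simp add: sum_distrib_left)
    qed
    also have "\<dots> = cl_mult n x (cl_mult n y z) C"
      using True by (subst mult_alt[of n x "cl_mult n y z" C]) simp
    finally show ?thesis .
  qed
qed



lemma mult_add_left: "cl_mult n (cl_add x y) z = cl_add (cl_mult n x z) (cl_mult n y z)"
  by (rule ext) (simp add: mult_alt cl_add_def sum.distrib[symmetric] algebra_simps)

lemma mult_add_right: "cl_mult n z (cl_add x y) = cl_add (cl_mult n z x) (cl_mult n z y)"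
  by (rule ext) (simp add: mult_alt cl_add_def sum.distrib[symmetric] algebra_simps)

lemma mult_scale_left: "cl_mult n (cl_scale c x) z = cl_scale c (cl_mult n x z)"
  by (rule ext) (simp add: mult_alt cl_scale_def sum_distrib_left algebra_simps)

lemma mult_scale_right: "cl_mult n z (cl_scale c x) = cl_scale c (cl_mult n z x)"
  by (rule ext) (simp add: mult_alt cl_scale_def sum_distrib_left algebra_simps)

lemma mult_zero_left[simp]: "cl_mult n cl_zero z = cl_zero"
  by (rule ext) (simp add: mult_alt cl_zero_def)

lemma mult_zero_right[simp]: "cl_mult n z cl_zero = cl_zero"
  by (rule ext) (simp add: mult_alt cl_zero_def)

lemma mult_sum_left: "finite K \<Longrightarrow> cl_mult n (cl_sum f K) z = cl_sum (\<lambda>k. cl_mult n (f k) z) K"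
  apply (rule ext)
  apply (simp add: mult_alt cl_sum_def sum_distrib_left sum_distrib_right)
  apply (subst sum.swap) apply (simp add: algebra_simps)
  done

lemma mult_sum_right: "finite K \<Longrightarrow> cl_mult n z (cl_sum f K) = cl_sum (\<lambda>k. cl_mult n z (f k)) K"
  apply (rule ext)
  apply (simp add: mult_alt cl_sum_def sum_distrib_left sum_distrib_right)
  apply (subst sum.swap) apply (simp add: algebra_simps)
  done

lemma if10_mult[simp]: "(if P then 1 else 0) * (x::complex) = (if P then x else 0)"
  "x * (if P then 1 else 0) = (if P then x else 0)" by auto

lemma if0_mult[simp]: "(if P then a else 0) * (b::complex) = (if P then a*b else 0)" by auto
lemma sd_self[simp]: "sd C C = {}" unfolding sd_def by auto

lemma sg_empty1[simp]: "sg {} C = 1" by (simp add: sg_def)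
lemma sg_empty2[simp]: "sg C {} = 1" by (simp add: sg_def)

lemma sd_empty_iff: "(sd A C = {}) = (A = C)" unfolding sd_def by auto
lemma sd_empty1[simp]: "sd {} C = C" unfolding sd_def by auto

lemma one_alg[simp]: "cl_one \<in> clifford_alg n"
  by (simp add: clifford_alg_def cl_one_def)

lemma mult_one_left: "x \<in> clifford_alg n \<Longrightarrow> cl_mult n cl_one x = x"
proof (rule ext)
  fix C assume x: "x \<in> clifford_alg n"
  show "cl_mult n cl_one x C = x C"
  proof (cases "C \<subseteq> {1..n}")
    case True
    have "cl_mult n cl_one x C = (\<Sum>A\<in>Pow {1..n}. if A = {} then x C else 0)"
      using True by (simp add: mult_alt cl_one_def cong: if_cong)
    also have "\<dots> = x C" by (subst sum.delta) auto
    finally show ?thesis .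
  next
    case False then show ?thesis using x by (auto simp: mult_alt clifford_alg_def)
  qed
qed

lemma mult_one_right: "x \<in> clifford_alg n \<Longrightarrow> cl_mult n x cl_one = x"
proof (rule ext)
  fix C assume x: "x \<in> clifford_alg n"
  show "cl_mult n x cl_one C = x C"
  proof (cases "C \<subseteq> {1..n}")
    case True
    have "cl_mult n x cl_one C = (\<Sum>A\<in>Pow {1..n}. if A = C then x C else 0)"
      using True by (intro trans[OF mult_alt] ) (auto simp: cl_one_def sd_empty_iff intro!: sum.cong)
    also have "\<dots> = x C" using True by (subst sum.delta) auto
    finally show ?thesis .
  next
    case False then show ?thesis using x by (auto simp: mult_alt clifford_alg_def)
  qed
qed

lemma mult_gen_left:
  "cl_mult n (cl_gen i) y C = (if C \<subseteq> {1..n} \<and> i \<in> {1..n} then sg {i} (sd {i} C) * y (sd {i} C) else 0)"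
proof (cases "C \<subseteq> {1..n}")
  case True
  have "cl_mult n (cl_gen i) y C = (\<Sum>A\<in>Pow {1..n}. if A = {i} then sg {i} (sd {i} C) * y (sd {i} C) else 0)"
    using True by (simp add: mult_alt cl_gen_def cong: if_cong)
  also have "\<dots> = (if i \<in> {1..n} then sg {i} (sd {i} C) * y (sd {i} C) else 0)"
    by (subst sum.delta) auto
  finally show ?thesis using True by simp
qed (simp add: mult_alt)

definition ac :: "nat \<Rightarrow> cliff \<Rightarrow> cliff \<Rightarrow> cliff" where
  "ac n a b = cl_add (cl_mult n a b) (cl_mult n b a)"

lemma sg_single: "sg {i} {j} = (if j \<le> i then -1 else 1)" by (simp add: sg_def)

lemma gen_mult_gen:
  assumes "a \<in> {1..n}" "b \<in> {1..n}"
  shows "cl_mult n (cl_gen a) (cl_gen b) C = (if C = sd {a} {b} then sg {a} {b} else 0)"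
proof (cases "C = sd {a} {b}")
  case True
  then have "C \<subseteq> {1..n}" using assms by (auto simp: sd_def)
  then show ?thesis using True assms by (subst mult_gen_left) (simp add: cl_gen_def)
next
  case False
  then have "sd {a} C \<noteq> {b}" by (auto simp: sd_eq_iff)
  then show ?thesis using False assms by (subst mult_gen_left) (simp add: cl_gen_def)
qed

lemma gen_ac:
  assumes "1 \<le> i" "i \<le> n" "1 \<le> j" "j \<le> n"
  shows "ac n (cl_gen i) (cl_gen j) = (if i = j then cl_scale (-2) cl_one else cl_zero)"
proof (rule ext)
  fix C
  have a: "i \<in> {1..n}" "j \<in> {1..n}" using assms by auto
  have e: "sd {j} {i} = sd {i} {j}" by (auto simp: sd_def)
  have v: "ac n (cl_gen i) (cl_gen j) C = (if C = sd {i} {j} then sg {i} {j} + sg {j} {i} else 0)"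
    unfolding ac_def cl_add_def gen_mult_gen[OF a] gen_mult_gen[OF a(2,1)] e by simp
  show "ac n (cl_gen i) (cl_gen j) C = (if i = j then cl_scale (-2) cl_one else cl_zero) C"
  proof (cases "i = j")
    case True
    have "sd {i} {j} = {}" using True by (simp add: sd_def)
    then show ?thesis using True v by (simp add: sg_single cl_scale_def cl_one_def)
  next
    case False
    then show ?thesis using v by (simp add: sg_single cl_zero_def)
  qed
qed

lemma ac_sym: "ac n a b = ac n b a"
  unfolding ac_def cl_add_def by (auto simp: add.commute)

lemma ac_add_left: "ac n (cl_add a b) c = cl_add (ac n a c) (ac n b c)"
  unfolding ac_def mult_add_left mult_add_right by (rule ext) (simp add: cl_add_def)

lemma ac_add_right: "ac n c (cl_add a b) = cl_add (ac n c a) (ac n c b)"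
  unfolding ac_def mult_add_left mult_add_right by (rule ext) (simp add: cl_add_def)

lemma ac_scale_left: "ac n (cl_scale r a) c = cl_scale r (ac n a c)"
  unfolding ac_def mult_scale_left mult_scale_right by (rule ext) (simp add: cl_add_def cl_scale_def algebra_simps)

lemma ac_scale_right: "ac n c (cl_scale r a) = cl_scale r (ac n c a)"
  unfolding ac_def mult_scale_left mult_scale_right by (rule ext) (simp add: cl_add_def cl_scale_def algebra_simps)

lemmas ac_lin = ac_add_left ac_add_right ac_scale_left ac_scale_right

lemma witt_rels:
  assumes "1 \<le> k" "2*k \<le> n" "1 \<le> l" "2*l \<le> n"
  shows "ac n (witt k) (witt l) = cl_zero"
    "ac n (witt_dag k) (witt_dag l) = cl_zero"
    "ac n (witt_dag k) (witt l) = (if k = l then cl_one else cl_zero)"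
proof -
  have d: "(2*k-1 = 2*l-1) = (k = l)" "(2*k = 2*l) = (k=l)" "(2*k-1 = 2*l) = False" "(2*k = 2*l-1) = False"
    "(2*l-1 = 2*k-1) = (k = l)" "(2*l = 2*k) = (k=l)" "(2*l-1 = 2*k) = False" "(2*l = 2*k-1) = False"
    using assms by presburger+
  have g: "1 \<le> 2*k-1" "2*k-1 \<le> n" "1 \<le> 2*k" "1 \<le> 2*l-1" "2*l-1 \<le> n" "1 \<le> 2*l"
    using assms by auto
  have g2: "2*k \<le> n" "2*l \<le> n" using assms by auto
  have G: "ac n (cl_gen (2*k-1)) (cl_gen (2*l-1)) = (if k = l then cl_scale (-2) cl_one else cl_zero)"
    "ac n (cl_gen (2*k-1)) (cl_gen (2*l)) = cl_zero"
    "ac n (cl_gen (2*k)) (cl_gen (2*l-1)) = cl_zero"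
    "ac n (cl_gen (2*k)) (cl_gen (2*l)) = (if k = l then cl_scale (-2) cl_one else cl_zero)"
    using gen_ac[OF g(1) g(2) g(4) g(5)] gen_ac[OF g(1) g(2) g(6) g2(2)]
      gen_ac[OF g(3) g2(1) g(4) g(5)] gen_ac[OF g(3) g2(1) g(6) g2(2)] d by simp_all
  show "ac n (witt k) (witt l) = cl_zero"
    unfolding witt_def ac_lin G by (auto simp: fun_eq_iff cl_add_def cl_scale_def cl_zero_def cl_one_def)
  show "ac n (witt_dag k) (witt_dag l) = cl_zero"
    unfolding witt_dag_def ac_lin G by (auto simp: fun_eq_iff cl_add_def cl_scale_def cl_zero_def cl_one_def)
  show "ac n (witt_dag k) (witt l) = (if k = l then cl_one else cl_zero)"
    unfolding witt_def witt_dag_def ac_lin G by (auto simp: fun_eq_iff cl_add_def cl_scale_def cl_zero_def cl_one_def)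
qed



lemma cl_sum_apply: "cl_sum f K C = (\<Sum>k\<in>K. f k C)" by (simp add: cl_sum_def)
lemma cl_add_apply: "cl_add x y C = x C + y C" by (simp add: cl_add_def)
lemma cl_scale_apply: "cl_scale c x C = c * x C" by (simp add: cl_scale_def)
lemma cl_one_apply: "cl_one C = (if C = {} then 1 else 0)" by (simp add: cl_one_def)
lemma cl_zero_apply: "cl_zero C = 0" by (simp add: cl_zero_def)
lemmas cl_apply = cl_sum_apply cl_add_apply cl_scale_apply cl_zero_apply

lemma swap:
  assumes "ac n a b = cl_scale \<alpha> cl_one"
  shows "cl_mult n a (cl_mult n b X) C = \<alpha> * cl_mult n cl_one X C - cl_mult n b (cl_mult n a X) C"
proof -
  have "cl_mult n (ac n a b) X = cl_add (cl_mult n a (cl_mult n b X)) (cl_mult n b (cl_mult n a X))"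
    unfolding ac_def mult_add_left cl_mult_assoc ..
  then have "cl_mult n a (cl_mult n b X) C + cl_mult n b (cl_mult n a X) C = \<alpha> * cl_mult n cl_one X C"
    unfolding assms mult_scale_left by (metis cl_add_apply cl_scale_apply)
  then show ?thesis by (simp add: algebra_simps)
qed

lemma one_mult_mult: "cl_mult n cl_one (cl_mult n c X) = cl_mult n c X"
  by (simp add: mult_one_left)

lemma mult_one_mult: "b \<in> clifford_alg n \<Longrightarrow> cl_mult n b (cl_mult n cl_one X) = cl_mult n b X"
  by (simp add: cl_mult_assoc[symmetric] mult_one_right)

lemma triple:
  assumes "ac n a b = cl_scale \<alpha> cl_one" "ac n a c = cl_scale \<beta> cl_one" "b \<in> clifford_alg n"
  shows "cl_mult n a (cl_mult n b (cl_mult n c G)) C =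
     \<alpha> * cl_mult n c G C - \<beta> * cl_mult n b G C + cl_mult n b (cl_mult n c (cl_mult n a G)) C"
proof -
  have 1: "cl_mult n a (cl_mult n b (cl_mult n c G)) C = \<alpha> * cl_mult n c G C - cl_mult n b (cl_mult n a (cl_mult n c G)) C"
    using swap[OF assms(1)] one_mult_mult by simp
  have 2: "cl_mult n a (cl_mult n c G) = cl_add (cl_scale \<beta> (cl_mult n cl_one G)) (cl_scale (-1) (cl_mult n c (cl_mult n a G)))"
    by (rule ext) (simp add: cl_apply swap[OF assms(2)])
  have 3: "cl_mult n b (cl_mult n a (cl_mult n c G)) C = \<beta> * cl_mult n b G C - cl_mult n b (cl_mult n c (cl_mult n a G)) C"
    unfolding 2 mult_add_right mult_scale_right mult_one_mult[OF assms(3)] by (simp add: cl_apply)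
  show ?thesis using 1 3 by simp
qed

definition pairop :: "nat \<Rightarrow> (nat \<Rightarrow> cliff) \<Rightarrow> (nat \<Rightarrow> cliff) \<Rightarrow> nat set \<Rightarrow> cliff" where
  "pairop n a b J = cl_sum (\<lambda>j. cl_mult n (a j) (b j)) J"

lemma pairop_mult: "finite J \<Longrightarrow> cl_mult n (pairop n a b J) X = cl_sum (\<lambda>j. cl_mult n (a j) (cl_mult n (b j) X)) J"
  unfolding pairop_def by (simp add: mult_sum_left cl_mult_assoc)

lemma generic:
  fixes K J :: "nat set"
  assumes fin: "finite K" "finite J"
    and alg: "\<And>j. j \<in> J \<Longrightarrow> a j \<in> clifford_alg n"
    and ra: "\<And>k j. k \<in> K \<Longrightarrow> j \<in> J \<Longrightarrow> ac n (u k) (a j) = cl_scale (\<alpha> k j) cl_one"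
    and rb: "\<And>k j. k \<in> K \<Longrightarrow> j \<in> J \<Longrightarrow> ac n (u k) (b j) = cl_scale (\<beta> k j) cl_one"
  shows "(\<Sum>k\<in>K. cl_mult n (u k) (cl_mult n (pairop n a b J) (Y k)) C) =
     cl_mult n (pairop n a b J) (cl_sum (\<lambda>k. cl_mult n (u k) (Y k)) K) C +
     (\<Sum>k\<in>K. \<Sum>j\<in>J. \<alpha> k j * cl_mult n (b j) (Y k) C - \<beta> k j * cl_mult n (a j) (Y k) C)"
proof -
  have "(\<Sum>k\<in>K. cl_mult n (u k) (cl_mult n (pairop n a b J) (Y k)) C) =
     (\<Sum>k\<in>K. \<Sum>j\<in>J. cl_mult n (u k) (cl_mult n (a j) (cl_mult n (b j) (Y k))) C)"
    using fin by (simp add: pairop_mult mult_sum_right cl_apply)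
  also have "\<dots> = (\<Sum>k\<in>K. \<Sum>j\<in>J. (\<alpha> k j * cl_mult n (b j) (Y k) C - \<beta> k j * cl_mult n (a j) (Y k) C)
       + cl_mult n (a j) (cl_mult n (b j) (cl_mult n (u k) (Y k))) C)"
    by (intro sum.cong refl) (simp add: triple[OF ra rb alg])
  also have "\<dots> = (\<Sum>k\<in>K. \<Sum>j\<in>J. \<alpha> k j * cl_mult n (b j) (Y k) C - \<beta> k j * cl_mult n (a j) (Y k) C)
      + (\<Sum>k\<in>K. \<Sum>j\<in>J. cl_mult n (a j) (cl_mult n (b j) (cl_mult n (u k) (Y k))) C)"
    by (simp add: sum.distrib)
  also have "(\<Sum>k\<in>K. \<Sum>j\<in>J. cl_mult n (a j) (cl_mult n (b j) (cl_mult n (u k) (Y k))) C)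
     = cl_mult n (pairop n a b J) (cl_sum (\<lambda>k. cl_mult n (u k) (Y k)) K) C"
    using fin by (simp add: pairop_mult mult_sum_right cl_apply sum.swap[of _ J])
  finally show ?thesis by simp
qed



lemma line_diff:
  fixes g :: "complex^'n::finite \<Rightarrow> complex"
  assumes "g differentiable (at z)"
  shows "(\<lambda>t::real. g (z + t *\<^sub>R v)) differentiable (at 0)"
proof -
  have f: "(\<lambda>t::real. z + t *\<^sub>R v) differentiable (at 0)" by (intro derivative_intros)
  have "g differentiable (at ((\<lambda>t::real. z + t *\<^sub>R v) 0))" using assms by simp
  from differentiable_chain_at[OF f this] show ?thesis by (simp add: o_def)
qed

lemma dir_mult:
  fixes F :: "complex^'n::finite \<Rightarrow> cliff"
  assumes "\<forall>A. (\<lambda>w. F w A) differentiable (at z)"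
  shows "(\<lambda>A. vector_derivative (\<lambda>t::real. cl_mult n c (F (z + t *\<^sub>R v)) A) (at 0)) =
     cl_mult n c (\<lambda>A. vector_derivative (\<lambda>t::real. F (z + t *\<^sub>R v) A) (at 0))"
proof (rule ext)
  fix C
  show "vector_derivative (\<lambda>t::real. cl_mult n c (F (z + t *\<^sub>R v)) C) (at 0) =
     cl_mult n c (\<lambda>A. vector_derivative (\<lambda>t::real. F (z + t *\<^sub>R v) A) (at 0)) C"
  proof (cases "C \<subseteq> {1..n}")
    case False
    then show ?thesis by (simp add: mult_alt vector_derivative_at[OF has_vector_derivative_const])
  next
    case True
    have d: "((\<lambda>t::real. F (z + t *\<^sub>R v) A) has_vector_derivative
        vector_derivative (\<lambda>t::real. F (z + t *\<^sub>R v) A) (at 0)) (at 0)" for A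
      using line_diff[OF assms[rule_format, of A], of v] vector_derivative_works by blast
    have "((\<lambda>t::real. \<Sum>A\<in>Pow {1..n}. sg A (sd A C) * c A * F (z + t *\<^sub>R v) (sd A C)) has_vector_derivative
        (\<Sum>A\<in>Pow {1..n}. sg A (sd A C) * c A * vector_derivative (\<lambda>t::real. F (z + t *\<^sub>R v) (sd A C)) (at 0))) (at 0)"
      by (intro has_vector_derivative_sum has_vector_derivative_mult_right d)
    then show ?thesis using True by (simp add: mult_alt vector_derivative_at)
  qed
qed

lemma pdx_mult: "\<forall>A. (\<lambda>w. F w A) differentiable (at z) \<Longrightarrow>
   pdx idx k (\<lambda>w. cl_mult n c (F w)) z = cl_mult n c (pdx idx k F z)"
  unfolding pdx_def by (rule dir_mult)

lemma pdy_mult: "\<forall>A. (\<lambda>w. F w A) differentiable (at z) \<Longrightarrow>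
   pdy idx k (\<lambda>w. cl_mult n c (F w)) z = cl_mult n c (pdy idx k F z)"
  unfolding pdy_def by (rule dir_mult)

lemma pdz_mult: "\<forall>A. (\<lambda>w. F w A) differentiable (at z) \<Longrightarrow>
   pdz idx k (\<lambda>w. cl_mult n c (F w)) z = cl_mult n c (pdz idx k F z)"
  unfolding pdz_def by (simp add: pdx_mult pdy_mult mult_add_right mult_scale_right)

lemma pdzb_mult: "\<forall>A. (\<lambda>w. F w A) differentiable (at z) \<Longrightarrow>
   pdzb idx k (\<lambda>w. cl_mult n c (F w)) z = cl_mult n c (pdzb idx k F z)"
  unfolding pdzb_def by (simp add: pdx_mult pdy_mult mult_add_right mult_scale_right)

lemma mult_differentiable:
  fixes F :: "complex^'n::finite \<Rightarrow> cliff"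
  assumes "\<forall>A. (\<lambda>w. F w A) differentiable (at z)"
  shows "(\<lambda>w. cl_mult n c (F w) C) differentiable (at z)"
proof (cases "C \<subseteq> {1..n}")
  case True
  then show ?thesis using assms by (simp add: mult_alt)
qed (simp add: mult_alt)



lemma par_eqs[simp]: fixes i j :: nat shows
  "(2*i - Suc 0 = 2*j - Suc 0) = (i = j)"
  "(2*i - Suc 0 = 2*j) = (i = 0 \<and> j = 0)"
  "(2*j = 2*i - Suc 0) = (i = 0 \<and> j = 0)"
  by presburger+

lemma Rff: "1 \<le> k \<Longrightarrow> k \<le> 2*p \<Longrightarrow> 1 \<le> l \<Longrightarrow> l \<le> 2*p \<Longrightarrow>
  ac (4*p) (witt k) (witt l) = cl_scale 0 cl_one"
  using witt_rels(1)[of k "4*p" l] by (simp add: cl_scale_def cl_zero_def)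
lemma Rdd: "1 \<le> k \<Longrightarrow> k \<le> 2*p \<Longrightarrow> 1 \<le> l \<Longrightarrow> l \<le> 2*p \<Longrightarrow>
  ac (4*p) (witt_dag k) (witt_dag l) = cl_scale 0 cl_one"
  using witt_rels(2)[of k "4*p" l] by (simp add: cl_scale_def cl_zero_def)
lemma Rdf: "1 \<le> k \<Longrightarrow> k \<le> 2*p \<Longrightarrow> 1 \<le> l \<Longrightarrow> l \<le> 2*p \<Longrightarrow>
  ac (4*p) (witt_dag k) (witt l) = cl_scale (if k = l then 1 else 0) cl_one"
  using witt_rels(3)[of k "4*p" l] by (auto simp: cl_scale_def cl_zero_def)
lemma Rfd: "1 \<le> k \<Longrightarrow> k \<le> 2*p \<Longrightarrow> 1 \<le> l \<Longrightarrow> l \<le> 2*p \<Longrightarrow>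
  ac (4*p) (witt k) (witt_dag l) = cl_scale (if k = l then 1 else 0) cl_one"
  using Rdf[of l p k] by (auto simp: ac_sym)

lemma witt_alg: "1 \<le> k \<Longrightarrow> 2*k \<le> n \<Longrightarrow> witt k \<in> clifford_alg n"
  by (auto simp: clifford_alg_def witt_def cl_scale_def cl_add_def cl_gen_def)
lemma witt_dag_alg: "1 \<le> k \<Longrightarrow> 2*k \<le> n \<Longrightarrow> witt_dag k \<in> clifford_alg n"
  by (auto simp: clifford_alg_def witt_dag_def cl_scale_def cl_add_def cl_gen_def)

lemma P_pair: "P_op p = pairop (4*p) (\<lambda>j. witt (2*j)) (\<lambda>j. witt (2*j-1)) {1..p}"
  unfolding P_op_def pairop_def ..
lemma Q_pair: "Q_op p = pairop (4*p) (\<lambda>j. witt_dag (2*j-1)) (\<lambda>j. witt_dag (2*j)) {1..p}"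
  unfolding Q_op_def pairop_def ..

lemma sum_pairs: fixes p :: nat shows "(\<Sum>k\<in>{1..2*p}. g k) = (\<Sum>i\<in>{1..p}. g (2*i-1) + g (2*i))"
proof (induction p)
  case 0 then show ?case by simp
next
  case (Suc p)
  have "{1..2*Suc p} = insert (2*p+2) (insert (2*p+1) {1..2*p})" by auto
  then have "(\<Sum>k\<in>{1..2*Suc p}. g k) = g (2*p+2) + (g (2*p+1) + (\<Sum>k\<in>{1..2*p}. g k))"
    by simp
  then show ?case using Suc by (simp add: add_ac)
qed

lemma P1:
  assumes z: "\<And>C. (\<Sum>k\<in>{1..2*p}. cl_mult (4*p) (witt_dag k) (G k) C) = 0"
    and J: "\<And>C. (\<Sum>j\<in>{1..p}. cl_mult (4*p) (witt (2*j-1)) (G (2*j)) C - cl_mult (4*p) (witt (2*j)) (G (2*j-1)) C) = 0"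
  shows "(\<Sum>k\<in>{1..2*p}. cl_mult (4*p) (witt_dag k) (cl_mult (4*p) (P_op p) (G k)) C) = 0"
proof -
  have zz: "cl_sum (\<lambda>k. cl_mult (4*p) (witt_dag k) (G k)) {1..2*p} = cl_zero"
    using z by (auto simp: fun_eq_iff cl_apply)
  have "(\<Sum>k\<in>{1..2*p}. cl_mult (4*p) (witt_dag k) (cl_mult (4*p) (P_op p) (G k)) C) =
     cl_mult (4*p) (P_op p) (cl_sum (\<lambda>k. cl_mult (4*p) (witt_dag k) (G k)) {1..2*p}) C +
     (\<Sum>k\<in>{1..2*p}. \<Sum>j\<in>{1..p}. (if k = 2*j then 1 else 0) * cl_mult (4*p) (witt (2*j-1)) (G k) C
        - (if k = 2*j-1 then 1 else 0) * cl_mult (4*p) (witt (2*j)) (G k) C)"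
    unfolding P_pair
    by (rule generic[where \<alpha> = "\<lambda>k j. if k = 2*j then 1 else 0" and \<beta> = "\<lambda>k j. if k = 2*j-1 then 1 else 0"])
       (auto intro!: witt_alg simp: Rdf)
  also have "\<dots> = (\<Sum>k\<in>{1..2*p}. \<Sum>j\<in>{1..p}. (if k = 2*j then cl_mult (4*p) (witt (2*j-1)) (G k) C else 0)
        - (if k = 2*j-1 then cl_mult (4*p) (witt (2*j)) (G k) C else 0))"
    unfolding zz mult_zero_right by (simp add: cl_zero_def cong: if_cong)
  also have "\<dots> = (\<Sum>j\<in>{1..p}. \<Sum>k\<in>{1..2*p}. (if k = 2*j then cl_mult (4*p) (witt (2*j-1)) (G k) C else 0)
        - (if k = 2*j-1 then cl_mult (4*p) (witt (2*j)) (G k) C else 0))"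
    by (rule sum.swap)
  also have "\<dots> = (\<Sum>j\<in>{1..p}. cl_mult (4*p) (witt (2*j-1)) (G (2*j)) C - cl_mult (4*p) (witt (2*j)) (G (2*j-1)) C)"
    by (intro sum.cong refl) (auto simp: sum_subtractf sum.delta)
  finally show ?thesis using J by simp
qed


lemma comm:
  fixes K J :: "nat set"
  assumes fin: "finite K" "finite J"
    and alg: "\<And>j. j \<in> J \<Longrightarrow> a j \<in> clifford_alg n"
    and ra: "\<And>k j. k \<in> K \<Longrightarrow> j \<in> J \<Longrightarrow> ac n (u k) (a j) = cl_scale 0 cl_one"
    and rb: "\<And>k j. k \<in> K \<Longrightarrow> j \<in> J \<Longrightarrow> ac n (u k) (b j) = cl_scale 0 cl_one"
  shows "(\<Sum>k\<in>K. cl_mult n (u k) (cl_mult n (pairop n a b J) (Y k)) C) =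
     cl_mult n (pairop n a b J) (cl_sum (\<lambda>k. cl_mult n (u k) (Y k)) K) C"
  using generic[where \<alpha>="\<lambda>k j. 0" and \<beta>="\<lambda>k j. 0", OF assms] by simp

lemma zero_pt: "(\<And>C. (\<Sum>k\<in>K. f k C) = 0) \<Longrightarrow> cl_sum f K = cl_zero"
  by (auto simp: fun_eq_iff cl_apply)

lemma eq_pt: "(\<And>C. (\<Sum>k\<in>K. f k C - g k C) = 0) \<Longrightarrow> finite K \<Longrightarrow> cl_sum f K = cl_sum g K"
  by (auto simp: fun_eq_iff cl_apply sum_subtractf)

lemma P2:
  assumes "\<And>C. (\<Sum>k\<in>{1..2*p}. cl_mult (4*p) (witt k) (H k) C) = 0"
  shows "(\<Sum>k\<in>{1..2*p}. cl_mult (4*p) (witt k) (cl_mult (4*p) (P_op p) (H k)) C) = 0"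
  unfolding P_pair
  apply (subst comm)
  apply (auto intro!: witt_alg simp: Rff)[5]
  using zero_pt[of "\<lambda>k. cl_mult (4*p) (witt k) (H k)", OF assms] by (simp add: cl_zero_apply)

lemma Q1:
  assumes "\<And>C. (\<Sum>k\<in>{1..2*p}. cl_mult (4*p) (witt_dag k) (G k) C) = 0"
  shows "(\<Sum>k\<in>{1..2*p}. cl_mult (4*p) (witt_dag k) (cl_mult (4*p) (Q_op p) (G k)) C) = 0"
  unfolding Q_pair
  apply (subst comm)
  apply (auto intro!: witt_dag_alg simp: Rdd)[5]
  using zero_pt[of "\<lambda>k. cl_mult (4*p) (witt_dag k) (G k)", OF assms] by (simp add: cl_zero_apply)

lemma P3:
  assumes J: "\<And>C. (\<Sum>j\<in>{1..p}. cl_mult (4*p) (witt (2*j-1)) (G (2*j)) C - cl_mult (4*p) (witt (2*j)) (G (2*j-1)) C) = 0"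
  shows "(\<Sum>j\<in>{1..p}. cl_mult (4*p) (witt (2*j-1)) (cl_mult (4*p) (P_op p) (G (2*j))) C
     - cl_mult (4*p) (witt (2*j)) (cl_mult (4*p) (P_op p) (G (2*j-1))) C) = 0"
proof -
  have e: "cl_sum (\<lambda>j. cl_mult (4*p) (witt (2*j-1)) (G (2*j))) {1..p} = cl_sum (\<lambda>j. cl_mult (4*p) (witt (2*j)) (G (2*j-1))) {1..p}"
    by (rule eq_pt[OF J]) simp
  have 1: "(\<Sum>j\<in>{1..p}. cl_mult (4*p) (witt (2*j-1)) (cl_mult (4*p) (P_op p) (G (2*j))) C) =
     cl_mult (4*p) (P_op p) (cl_sum (\<lambda>j. cl_mult (4*p) (witt (2*j-1)) (G (2*j))) {1..p}) C"
    unfolding P_pair by (rule comm) (auto intro!: witt_alg simp: Rff)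
  have 2: "(\<Sum>j\<in>{1..p}. cl_mult (4*p) (witt (2*j)) (cl_mult (4*p) (P_op p) (G (2*j-1))) C) =
     cl_mult (4*p) (P_op p) (cl_sum (\<lambda>j. cl_mult (4*p) (witt (2*j)) (G (2*j-1))) {1..p}) C"
    unfolding P_pair by (rule comm) (auto intro!: witt_alg simp: Rff)
  show ?thesis using 1 2 e by (simp add: sum_subtractf)
qed

lemma Q4:
  assumes J: "\<And>C. (\<Sum>j\<in>{1..p}. cl_mult (4*p) (witt_dag (2*j-1)) (H (2*j)) C - cl_mult (4*p) (witt_dag (2*j)) (H (2*j-1)) C) = 0"
  shows "(\<Sum>j\<in>{1..p}. cl_mult (4*p) (witt_dag (2*j-1)) (cl_mult (4*p) (Q_op p) (H (2*j))) C
     - cl_mult (4*p) (witt_dag (2*j)) (cl_mult (4*p) (Q_op p) (H (2*j-1))) C) = 0"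
proof -
  have e: "cl_sum (\<lambda>j. cl_mult (4*p) (witt_dag (2*j-1)) (H (2*j))) {1..p} = cl_sum (\<lambda>j. cl_mult (4*p) (witt_dag (2*j)) (H (2*j-1))) {1..p}"
    by (rule eq_pt[OF J]) simp
  have 1: "(\<Sum>j\<in>{1..p}. cl_mult (4*p) (witt_dag (2*j-1)) (cl_mult (4*p) (Q_op p) (H (2*j))) C) =
     cl_mult (4*p) (Q_op p) (cl_sum (\<lambda>j. cl_mult (4*p) (witt_dag (2*j-1)) (H (2*j))) {1..p}) C"
    unfolding Q_pair by (rule comm) (auto intro!: witt_dag_alg simp: Rdd)
  have 2: "(\<Sum>j\<in>{1..p}. cl_mult (4*p) (witt_dag (2*j)) (cl_mult (4*p) (Q_op p) (H (2*j-1))) C) =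
     cl_mult (4*p) (Q_op p) (cl_sum (\<lambda>j. cl_mult (4*p) (witt_dag (2*j)) (H (2*j-1))) {1..p}) C"
    unfolding Q_pair by (rule comm) (auto intro!: witt_dag_alg simp: Rdd)
  show ?thesis using 1 2 e by (simp add: sum_subtractf)
qed


lemma delta2: "finite I \<Longrightarrow> (\<Sum>i\<in>I. \<Sum>j\<in>I. (if i = j then 1 else 0) * X i j) = (\<Sum>i\<in>I. (X i i :: complex))"
  by (simp add: sum.delta' cong: if_cong)

lemma P4:
  assumes J: "\<And>C. (\<Sum>j\<in>{1..p}. cl_mult (4*p) (witt_dag (2*j-1)) (H (2*j)) C - cl_mult (4*p) (witt_dag (2*j)) (H (2*j-1)) C) = 0"
    and Z: "\<And>C. (\<Sum>k\<in>{1..2*p}. cl_mult (4*p) (witt k) (H k) C) = 0"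
  shows "(\<Sum>j\<in>{1..p}. cl_mult (4*p) (witt_dag (2*j-1)) (cl_mult (4*p) (P_op p) (H (2*j))) C
     - cl_mult (4*p) (witt_dag (2*j)) (cl_mult (4*p) (P_op p) (H (2*j-1))) C) = 0"
proof -
  let ?M = "cl_mult (4*p)"
  have e: "cl_sum (\<lambda>j. ?M (witt_dag (2*j-1)) (H (2*j))) {1..p} = cl_sum (\<lambda>j. ?M (witt_dag (2*j)) (H (2*j-1))) {1..p}"
    by (rule eq_pt[OF J]) simp
  have 1: "(\<Sum>i\<in>{1..p}. ?M (witt_dag (2*i-1)) (?M (P_op p) (H (2*i))) C) =
     ?M (P_op p) (cl_sum (\<lambda>i. ?M (witt_dag (2*i-1)) (H (2*i))) {1..p}) C +
     (\<Sum>i\<in>{1..p}. \<Sum>j\<in>{1..p}. 0 * ?M (witt (2*j-1)) (H (2*i)) C - (if i = j then 1 else 0) * ?M (witt (2*j)) (H (2*i)) C)"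
    unfolding P_pair
    by (rule generic[where \<alpha> = "\<lambda>i j. 0" and \<beta> = "\<lambda>i j. if i = j then 1 else 0"])
       (auto intro!: witt_alg simp: Rdf)
  have 2: "(\<Sum>i\<in>{1..p}. ?M (witt_dag (2*i)) (?M (P_op p) (H (2*i-1))) C) =
     ?M (P_op p) (cl_sum (\<lambda>i. ?M (witt_dag (2*i)) (H (2*i-1))) {1..p}) C +
     (\<Sum>i\<in>{1..p}. \<Sum>j\<in>{1..p}. (if i = j then 1 else 0) * ?M (witt (2*j-1)) (H (2*i-1)) C - 0 * ?M (witt (2*j)) (H (2*i-1)) C)"
    unfolding P_pair
    by (rule generic[where \<alpha> = "\<lambda>i j. if i = j then 1 else 0" and \<beta> = "\<lambda>i j. 0"])
       (auto intro!: witt_alg simp: Rdf)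
  have s: "(\<Sum>k\<in>{1..2*p}. ?M (witt k) (H k) C) = (\<Sum>i\<in>{1..p}. ?M (witt (2*i-1)) (H (2*i-1)) C + ?M (witt (2*i)) (H (2*i)) C)"
    by (rule sum_pairs)
  have h1: "(\<Sum>i\<in>{1..p}. ?M (witt_dag (2*i-1)) (?M (P_op p) (H (2*i))) C) =
     ?M (P_op p) (cl_sum (\<lambda>i. ?M (witt_dag (2*i-1)) (H (2*i))) {1..p}) C - (\<Sum>i\<in>{1..p}. ?M (witt (2*i)) (H (2*i)) C)"
    unfolding 1 using delta2[of "{1..p}" "\<lambda>i j. ?M (witt (2*j)) (H (2*i)) C"] by (simp add: sum_negf)
  have h2: "(\<Sum>i\<in>{1..p}. ?M (witt_dag (2*i)) (?M (P_op p) (H (2*i-1))) C) =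
     ?M (P_op p) (cl_sum (\<lambda>i. ?M (witt_dag (2*i)) (H (2*i-1))) {1..p}) C + (\<Sum>i\<in>{1..p}. ?M (witt (2*i-1)) (H (2*i-1)) C)"
    unfolding 2 using delta2[of "{1..p}" "\<lambda>i j. ?M (witt (2*j-1)) (H (2*i-1)) C"] by simp
  have z2: "(\<Sum>i\<in>{1..p}. ?M (witt (2*i-1)) (H (2*i-1)) C) + (\<Sum>i\<in>{1..p}. ?M (witt (2*i)) (H (2*i)) C) = 0"
    using Z[of C] s by (simp add: sum.distrib)
  show ?thesis
    unfolding sum_subtractf h1 h2 e using z2 by (simp add: add_eq_0_iff2)
qed


lemma Q2:
  assumes z: "\<And>C. (\<Sum>k\<in>{1..2*p}. cl_mult (4*p) (witt k) (H k) C) = 0"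
    and J: "\<And>C. (\<Sum>j\<in>{1..p}. cl_mult (4*p) (witt_dag (2*j-1)) (H (2*j)) C - cl_mult (4*p) (witt_dag (2*j)) (H (2*j-1)) C) = 0"
  shows "(\<Sum>k\<in>{1..2*p}. cl_mult (4*p) (witt k) (cl_mult (4*p) (Q_op p) (H k)) C) = 0"
proof -
  have zz: "cl_sum (\<lambda>k. cl_mult (4*p) (witt k) (H k)) {1..2*p} = cl_zero"
    using z by (auto simp: fun_eq_iff cl_apply)
  have "(\<Sum>k\<in>{1..2*p}. cl_mult (4*p) (witt k) (cl_mult (4*p) (Q_op p) (H k)) C) =
     cl_mult (4*p) (Q_op p) (cl_sum (\<lambda>k. cl_mult (4*p) (witt k) (H k)) {1..2*p}) C +
     (\<Sum>k\<in>{1..2*p}. \<Sum>j\<in>{1..p}. (if k = 2*j-1 then 1 else 0) * cl_mult (4*p) (witt_dag (2*j)) (H k) C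
        - (if k = 2*j then 1 else 0) * cl_mult (4*p) (witt_dag (2*j-1)) (H k) C)"
    unfolding Q_pair
    by (rule generic[where \<alpha> = "\<lambda>k j. if k = 2*j-1 then 1 else 0" and \<beta> = "\<lambda>k j. if k = 2*j then 1 else 0"])
       (auto intro!: witt_dag_alg simp: Rfd)
  also have "\<dots> = (\<Sum>k\<in>{1..2*p}. \<Sum>j\<in>{1..p}. (if k = 2*j-1 then cl_mult (4*p) (witt_dag (2*j)) (H k) C else 0)
        - (if k = 2*j then cl_mult (4*p) (witt_dag (2*j-1)) (H k) C else 0))"
    unfolding zz mult_zero_right by (simp add: cl_zero_def cong: if_cong)
  also have "\<dots> = (\<Sum>j\<in>{1..p}. \<Sum>k\<in>{1..2*p}. (if k = 2*j-1 then cl_mult (4*p) (witt_dag (2*j)) (H k) C else 0)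
        - (if k = 2*j then cl_mult (4*p) (witt_dag (2*j-1)) (H k) C else 0))"
    by (rule sum.swap)
  also have "\<dots> = (\<Sum>j\<in>{1..p}. cl_mult (4*p) (witt_dag (2*j)) (H (2*j-1)) C - cl_mult (4*p) (witt_dag (2*j-1)) (H (2*j)) C)"
    by (intro sum.cong refl) (auto simp: sum_subtractf sum.delta)
  also have "\<dots> = - (\<Sum>j\<in>{1..p}. cl_mult (4*p) (witt_dag (2*j-1)) (H (2*j)) C - cl_mult (4*p) (witt_dag (2*j)) (H (2*j-1)) C)"
    by (simp add: sum_negf[symmetric])
  finally show ?thesis using J by simp
qed

lemma Q3:
  assumes Z: "\<And>C. (\<Sum>k\<in>{1..2*p}. cl_mult (4*p) (witt_dag k) (G k) C) = 0"
    and J: "\<And>C. (\<Sum>j\<in>{1..p}. cl_mult (4*p) (witt (2*j-1)) (G (2*j)) C - cl_mult (4*p) (witt (2*j)) (G (2*j-1)) C) = 0"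
  shows "(\<Sum>j\<in>{1..p}. cl_mult (4*p) (witt (2*j-1)) (cl_mult (4*p) (Q_op p) (G (2*j))) C
     - cl_mult (4*p) (witt (2*j)) (cl_mult (4*p) (Q_op p) (G (2*j-1))) C) = 0"
proof -
  let ?M = "cl_mult (4*p)"
  have e: "cl_sum (\<lambda>j. ?M (witt (2*j-1)) (G (2*j))) {1..p} = cl_sum (\<lambda>j. ?M (witt (2*j)) (G (2*j-1))) {1..p}"
    by (rule eq_pt[OF J]) simp
  have 1: "(\<Sum>i\<in>{1..p}. ?M (witt (2*i-1)) (?M (Q_op p) (G (2*i))) C) =
     ?M (Q_op p) (cl_sum (\<lambda>i. ?M (witt (2*i-1)) (G (2*i))) {1..p}) C +
     (\<Sum>i\<in>{1..p}. \<Sum>j\<in>{1..p}. (if i = j then 1 else 0) * ?M (witt_dag (2*j)) (G (2*i)) C - 0 * ?M (witt_dag (2*j-1)) (G (2*i)) C)"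
    unfolding Q_pair
    by (rule generic[where \<alpha> = "\<lambda>i j. if i = j then 1 else 0" and \<beta> = "\<lambda>i j. 0"])
       (auto intro!: witt_dag_alg simp: Rfd)
  have 2: "(\<Sum>i\<in>{1..p}. ?M (witt (2*i)) (?M (Q_op p) (G (2*i-1))) C) =
     ?M (Q_op p) (cl_sum (\<lambda>i. ?M (witt (2*i)) (G (2*i-1))) {1..p}) C +
     (\<Sum>i\<in>{1..p}. \<Sum>j\<in>{1..p}. 0 * ?M (witt_dag (2*j)) (G (2*i-1)) C - (if i = j then 1 else 0) * ?M (witt_dag (2*j-1)) (G (2*i-1)) C)"
    unfolding Q_pair
    by (rule generic[where \<alpha> = "\<lambda>i j. 0" and \<beta> = "\<lambda>i j. if i = j then 1 else 0"])
       (auto intro!: witt_dag_alg simp: Rfd)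
  have s: "(\<Sum>k\<in>{1..2*p}. ?M (witt_dag k) (G k) C) = (\<Sum>i\<in>{1..p}. ?M (witt_dag (2*i-1)) (G (2*i-1)) C + ?M (witt_dag (2*i)) (G (2*i)) C)"
    by (rule sum_pairs)
  have h1: "(\<Sum>i\<in>{1..p}. ?M (witt (2*i-1)) (?M (Q_op p) (G (2*i))) C) =
     ?M (Q_op p) (cl_sum (\<lambda>i. ?M (witt (2*i-1)) (G (2*i))) {1..p}) C + (\<Sum>i\<in>{1..p}. ?M (witt_dag (2*i)) (G (2*i)) C)"
    unfolding 1 using delta2[of "{1..p}" "\<lambda>i j. ?M (witt_dag (2*j)) (G (2*i)) C"] by simp
  have h2: "(\<Sum>i\<in>{1..p}. ?M (witt (2*i)) (?M (Q_op p) (G (2*i-1))) C) =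
     ?M (Q_op p) (cl_sum (\<lambda>i. ?M (witt (2*i)) (G (2*i-1))) {1..p}) C - (\<Sum>i\<in>{1..p}. ?M (witt_dag (2*i-1)) (G (2*i-1)) C)"
    unfolding 2 using delta2[of "{1..p}" "\<lambda>i j. ?M (witt_dag (2*j-1)) (G (2*i-1)) C"] by (simp add: sum_negf)
  have z2: "(\<Sum>i\<in>{1..p}. ?M (witt_dag (2*i-1)) (G (2*i-1)) C) + (\<Sum>i\<in>{1..p}. ?M (witt_dag (2*i)) (G (2*i)) C) = 0"
    using Z[of C] s by (simp add: sum.distrib)
  show ?thesis
    unfolding sum_subtractf h1 h2 e using z2 by (simp add: add_eq_0_iff2)
qed



lemma dz_iff: "(dirac_z p idx F z = cl_zero) = (\<forall>C. (\<Sum>k\<in>{1..2*p}. cl_mult (4*p) (witt_dag k) (pdz idx k F z) C) = 0)"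
  unfolding dirac_z_def by (auto simp: fun_eq_iff cl_apply)
lemma dzd_iff: "(dirac_z_dag p idx F z = cl_zero) = (\<forall>C. (\<Sum>k\<in>{1..2*p}. cl_mult (4*p) (witt k) (pdzb idx k F z) C) = 0)"
  unfolding dirac_z_dag_def by (auto simp: fun_eq_iff cl_apply)
lemma dJ_iff: "(dirac_zJ p idx F z = cl_zero) = (\<forall>C. (\<Sum>j\<in>{1..p}. cl_mult (4*p) (witt (2*j-1)) (pdz idx (2*j) F z) C
    - cl_mult (4*p) (witt (2*j)) (pdz idx (2*j-1) F z) C) = 0)"
  unfolding dirac_zJ_def by (auto simp: fun_eq_iff cl_apply)
lemma dJd_iff: "(dirac_zJ_dag p idx F z = cl_zero) = (\<forall>C. (\<Sum>j\<in>{1..p}. cl_mult (4*p) (witt_dag (2*j-1)) (pdzb idx (2*j) F z) C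
    - cl_mult (4*p) (witt_dag (2*j)) (pdzb idx (2*j-1) F z) C) = 0)"
  unfolding dirac_zJ_dag_def by (auto simp: fun_eq_iff cl_apply)

lemma spinor_mult: "x \<in> spinor_space p \<Longrightarrow> cl_mult (4*p) c x \<in> spinor_space p"
proof -
  assume "x \<in> spinor_space p"
  then obtain a where "x = cl_mult (4*p) a (prim_idem p)" unfolding spinor_space_def by auto
  then have "cl_mult (4*p) c x = cl_mult (4*p) (cl_mult (4*p) c a) (prim_idem p)" by (simp add: cl_mult_assoc)
  then show ?thesis unfolding spinor_space_def by auto
qed

lemma mono_mult:
  assumes q: "q_monogenic p idx \<Omega> F"
    and r1: "\<And>G C. (\<And>C. (\<Sum>k\<in>{1..2*p}. cl_mult (4*p) (witt_dag k) (G k) C) = 0) \<Longrightarrow>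
        (\<And>C. (\<Sum>j\<in>{1..p}. cl_mult (4*p) (witt (2*j-1)) (G (2*j)) C - cl_mult (4*p) (witt (2*j)) (G (2*j-1)) C) = 0) \<Longrightarrow>
        (\<Sum>k\<in>{1..2*p}. cl_mult (4*p) (witt_dag k) (cl_mult (4*p) c (G k)) C) = 0"
    and r2: "\<And>H C. (\<And>C. (\<Sum>k\<in>{1..2*p}. cl_mult (4*p) (witt k) (H k) C) = 0) \<Longrightarrow>
        (\<And>C. (\<Sum>j\<in>{1..p}. cl_mult (4*p) (witt_dag (2*j-1)) (H (2*j)) C - cl_mult (4*p) (witt_dag (2*j)) (H (2*j-1)) C) = 0) \<Longrightarrow>
        (\<Sum>k\<in>{1..2*p}. cl_mult (4*p) (witt k) (cl_mult (4*p) c (H k)) C) = 0"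
    and r3: "\<And>G C. (\<And>C. (\<Sum>k\<in>{1..2*p}. cl_mult (4*p) (witt_dag k) (G k) C) = 0) \<Longrightarrow>
        (\<And>C. (\<Sum>j\<in>{1..p}. cl_mult (4*p) (witt (2*j-1)) (G (2*j)) C - cl_mult (4*p) (witt (2*j)) (G (2*j-1)) C) = 0) \<Longrightarrow>
        (\<Sum>j\<in>{1..p}. cl_mult (4*p) (witt (2*j-1)) (cl_mult (4*p) c (G (2*j))) C
           - cl_mult (4*p) (witt (2*j)) (cl_mult (4*p) c (G (2*j-1))) C) = 0"
    and r4: "\<And>H C. (\<And>C. (\<Sum>k\<in>{1..2*p}. cl_mult (4*p) (witt k) (H k) C) = 0) \<Longrightarrow>
        (\<And>C. (\<Sum>j\<in>{1..p}. cl_mult (4*p) (witt_dag (2*j-1)) (H (2*j)) C - cl_mult (4*p) (witt_dag (2*j)) (H (2*j-1)) C) = 0) \<Longrightarrow>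
        (\<Sum>j\<in>{1..p}. cl_mult (4*p) (witt_dag (2*j-1)) (cl_mult (4*p) c (H (2*j))) C
           - cl_mult (4*p) (witt_dag (2*j)) (cl_mult (4*p) c (H (2*j-1))) C) = 0"
  shows "q_monogenic p idx \<Omega> (\<lambda>z. cl_mult (4*p) c (F z))"
proof -
  have sp: "\<forall>z\<in>\<Omega>. F z \<in> spinor_space p" and df: "cl_differentiable_on \<Omega> F"
    and ops: "\<forall>z\<in>\<Omega>. dirac_z p idx F z = cl_zero \<and> dirac_z_dag p idx F z = cl_zero \<and>
              dirac_zJ p idx F z = cl_zero \<and> dirac_zJ_dag p idx F z = cl_zero"
    using q unfolding q_monogenic_def by auto
  have "dirac_z p idx (\<lambda>w. cl_mult (4*p) c (F w)) z = cl_zero \<and>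
        dirac_z_dag p idx (\<lambda>w. cl_mult (4*p) c (F w)) z = cl_zero \<and>
        dirac_zJ p idx (\<lambda>w. cl_mult (4*p) c (F w)) z = cl_zero \<and>
        dirac_zJ_dag p idx (\<lambda>w. cl_mult (4*p) c (F w)) z = cl_zero" if z: "z \<in> \<Omega>" for z
  proof -
    have d: "\<forall>A. (\<lambda>w. F w A) differentiable (at z)" using df z unfolding cl_differentiable_on_def by auto
    have a: "\<And>C. (\<Sum>k\<in>{1..2*p}. cl_mult (4*p) (witt_dag k) (pdz idx k F z) C) = 0"
      using ops z dz_iff by blast
    have b: "\<And>C. (\<Sum>k\<in>{1..2*p}. cl_mult (4*p) (witt k) (pdzb idx k F z) C) = 0"
      using ops z dzd_iff by blast
    have c: "\<And>C. (\<Sum>j\<in>{1..p}. cl_mult (4*p) (witt (2*j-1)) (pdz idx (2*j) F z) C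
       - cl_mult (4*p) (witt (2*j)) (pdz idx (2*j-1) F z) C) = 0"
      using ops z dJ_iff by blast
    have e: "\<And>C. (\<Sum>j\<in>{1..p}. cl_mult (4*p) (witt_dag (2*j-1)) (pdzb idx (2*j) F z) C
       - cl_mult (4*p) (witt_dag (2*j)) (pdzb idx (2*j-1) F z) C) = 0"
      using ops z dJd_iff by blast
    show ?thesis
      unfolding dz_iff dzd_iff dJ_iff dJd_iff pdz_mult[OF d] pdzb_mult[OF d]
      using r1[of "\<lambda>k. pdz idx k F z", OF a c] r2[of "\<lambda>k. pdzb idx k F z", OF b e]
        r3[of "\<lambda>k. pdz idx k F z", OF a c] r4[of "\<lambda>k. pdzb idx k F z", OF b e]
      by blast
  qed
  moreover have "cl_differentiable_on \<Omega> (\<lambda>z. cl_mult (4*p) c (F z))"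
    using df unfolding cl_differentiable_on_def by (auto intro!: mult_differentiable)
  moreover have "\<forall>z\<in>\<Omega>. cl_mult (4*p) c (F z) \<in> spinor_space p"
    using sp spinor_mult by blast
  ultimately show ?thesis unfolding q_monogenic_def by blast
qed

theorem lemma2:
  fixes p :: nat and idx :: "nat \<Rightarrow> 'n::finite"
    and \<Omega> :: "(complex^'n) set" and F :: "complex^'n \<Rightarrow> cliff"
  assumes "bij_betw idx {1..2*p} (UNIV :: 'n set)"
    and "open \<Omega>"
    and "cl_differentiable_on \<Omega> F"
    and "q_monogenic p idx \<Omega> F"
  shows "q_monogenic p idx \<Omega> (\<lambda>z. cl_mult (4*p) (P_op p) (F z)) \<and>
         q_monogenic p idx \<Omega> (\<lambda>z. cl_mult (4*p) (Q_op p) (F z))"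
proof
  show "q_monogenic p idx \<Omega> (\<lambda>z. cl_mult (4*p) (P_op p) (F z))"
    using mono_mult[OF assms(4) P1 P2 P3 P4] .
  show "q_monogenic p idx \<Omega> (\<lambda>z. cl_mult (4*p) (Q_op p) (F z))"
    using mono_mult[OF assms(4) Q1 Q2 Q3 Q4] .
qed

end
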